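(* Let $v,a,b,c\in\mathbb{C}$ with $\Re(v)<2$, $\Re(c)>0$, and $\Re(vc+a+b)>0$, $\Re(vc+a-b)>0$, $\Re(vc-a+b)>0$, $\Re(vc-a-b)>0$. Fix a square root $\sqrt{a^2-b^2}$ and put $\sigma_1=\frac v2-\frac{\sqrt{a^2-b^2}}{2c}$, $\sigma_2=\frac v2+\frac{\sqrt{a^2-b^2}}{2c}$, $\sigma_3=\frac v2-\frac{a}{2c}-\frac{b}{2c}$, $\sigma_4=\frac v2-\frac{a}{2c}+\frac{b}{2c}$, $\sigma_5=\frac v2+\frac{a}{2c}+\frac{b}{2c}$, $\sigma_6=\frac v2+\frac{a}{2c}-\frac{b}{2c}$, $P=(vc-a-b)(vc+a+b)(vc-a+b)(vc+a-b)$; assume $\sigma_1,\sigma_2\notin\mathbb{Z}_0^-$ and $1+\sigma_j\notin\mathbb{Z}_0^-$ ($j=3,4,5,6$). Then $$ \int_0^\infty\frac{\sinh(ax)\cosh(bx)}{\sinh^{v}(cx)}\,dx=\frac{2^{v}(v^2ac^2-a^3+ab^2)}{P}\;{}_7F_6\!\left(\begin{matrix}v,\ 1+\sigma_1,\ 1+\sigma_2,\ \sigma_3,\ \sigma_4,\ \sigma_5,\ \sigma_6\\ \sigma_1,\ \sigma_2,\ 1+\sigma_3,\ 1+\sigma_4,\ 1+\sigma_5,\ 1+\sigma_6\end{matrix};\,1\right). $$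
   Context: $\mathbb{Z}_0^-=\{0,-1,-2,\dots\}$. The Pochhammer symbol is $(\lambda)_0=1$, $(\lambda)_n=\lambda(\lambda+1)\cdots(\lambda+n-1)$ for $n\ge1$. The generalized hypergeometric series is ${}_pF_q\!\left(\begin{matrix}\alpha_1,\dots,\alpha_p\\ \beta_1,\dots,\beta_q\end{matrix};z\right)=\sum_{n=0}^\infty\frac{(\alpha_1)_n\cdots(\alpha_p)_n}{(\beta_1)_n\cdots(\beta_q)_n}\frac{z^n}{n!}$ (with no $\beta_j\in\mathbb{Z}_0^-$); when $p=q+1$ and $z=1$ it converges if $\Re(\sum\beta_j-\sum\alpha_i)>0$. For $\Re(c)>0$ and $x>0$, the complex power $\sinh^{v}(cx)$ means $2^{-v}e^{vcx}(1-e^{-2cx})^{v}$, with the principal branch of $(1-e^{-2cx})^{v}$ (this agrees with the ordinary real power when $c>0$ and $v$ is real). *)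

theory Defs
  imports "HOL-Analysis.Analysis"
begin

definition hypergeo :: "complex list \<Rightarrow> complex list \<Rightarrow> complex \<Rightarrow> complex" where
  "hypergeo as bs z =
     (\<Sum>n. (\<Prod>a\<leftarrow>as. pochhammer a n) / (\<Prod>b\<leftarrow>bs. pochhammer b n) * z ^ n / fact n)"

definition sinh_pow :: "complex \<Rightarrow> complex \<Rightarrow> real \<Rightarrow> complex" where
  "sinh_pow v c x =
     (2 powr (-v)) * exp (v * c * of_real x) * (1 - exp (-2 * c * of_real x)) powr v"

end

theory Submission imports Defs begin


lemma einterval_0_inf: "einterval 0 \<infinity> = {0::real<..}"
  by (auto simp: einterval_iff zero_ereal_def)

lemma cont_set_meas:
  fixes f :: "real \<Rightarrow> 'b::euclidean_space"
  assumes "continuous_on UNIV f" "A \<in> sets borel"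
  shows "set_borel_measurable lborel A f"
proof -
  have [measurable]: "f \<in> borel_measurable borel" using borel_measurable_continuous_onI assms(1) .
  have "(\<lambda>x. indicat_real A x *\<^sub>R f x) \<in> borel_measurable borel"
    using assms(2) \<open>f \<in> borel_measurable borel\<close> by measurable
  then show ?thesis unfolding set_borel_measurable_def by simp
qed

lemma real_xexp_integral:
  fixes W :: real assumes W: "W > 0"
  shows "set_integrable lborel {0<..} (\<lambda>x. x * exp (- W * x))"
    "(LINT x:{0<..}|lborel. x * exp (- W * x)) = 1 / W\<^sup>2"
proof -
  let ?F = "\<lambda>x::real. -(x / W + 1 / W\<^sup>2) * exp (- W * x)"
  have Wnz: "W \<noteq> 0" using W by auto
  have D: "\<And>x. (?F has_real_derivative x * exp (- W * x)) (at x)"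
    using Wnz by (auto intro!: derivative_eq_intros simp del: of_nat_numeral simp: field_simps power2_eq_square)
  have L0: "((?F \<circ> real_of_ereal) \<longlongrightarrow> -(1/W\<^sup>2)) (at_right 0)"
    unfolding zero_ereal_def ereal_tendsto_simps using Wnz
    by (auto intro!: tendsto_eq_intros)
  have Li: "((?F \<circ> real_of_ereal) \<longlongrightarrow> 0) (at_left \<infinity>)"
    unfolding ereal_tendsto_simps using W by real_asymp
  have *: "set_integrable lborel (einterval 0 \<infinity>) (\<lambda>x. x * exp (- W * x))"
          "(LBINT x=0..\<infinity>. x * exp (- W * x)) = 0 - (-(1/W\<^sup>2))"
    by (rule interval_integral_FTC_nonneg[OF _ D _ _ L0 Li]; auto)+
  then show "set_integrable lborel {0<..} (\<lambda>x. x * exp (- W * x))"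
    "(LINT x:{0<..}|lborel. x * exp (- W * x)) = 1 / W\<^sup>2"
    by (auto simp: einterval_0_inf interval_lebesgue_integral_0_infty)
qed

lemma real_exp_integral:
  fixes W :: real assumes W: "W > 0"
  shows "set_integrable lborel {0<..} (\<lambda>x. exp (- W * x))"
proof -
  let ?F = "\<lambda>x::real. -(1 / W) * exp (- W * x)"
  have Wnz: "W \<noteq> 0" using W by auto
  have D: "\<And>x. (?F has_real_derivative exp (- W * x)) (at x)"
    using Wnz by (auto intro!: derivative_eq_intros simp del: of_nat_numeral simp: field_simps)
  have L0: "((?F \<circ> real_of_ereal) \<longlongrightarrow> -(1/W)) (at_right 0)"
    unfolding zero_ereal_def ereal_tendsto_simps using Wnz
    by (auto intro!: tendsto_eq_intros)
  have Li: "((?F \<circ> real_of_ereal) \<longlongrightarrow> 0) (at_left \<infinity>)"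
    unfolding ereal_tendsto_simps using W by real_asymp
  have *: "set_integrable lborel (einterval 0 \<infinity>) (\<lambda>x. exp (- W * x))"
    by (rule interval_integral_FTC_nonneg[OF _ D _ _ L0 Li]; auto)+
  then show ?thesis
    by (auto simp: einterval_0_inf)
qed

lemma complex_exp_integral:
  fixes w :: complex assumes w: "Re w > 0"
  shows "set_integrable lborel {0<..} (\<lambda>x::real. exp (- w * of_real x))"
    "(LINT x:{0<..}|lborel. exp (- w * of_real x)) = 1 / w"
proof -
  have wnz: "w \<noteq> 0" using w by auto
  show I: "set_integrable lborel {0<..} (\<lambda>x::real. exp (- w * of_real x))"
  proof (rule set_integrable_bound[OF real_exp_integral[OF w]])
    show "set_borel_measurable lborel {0<..} (\<lambda>x::real. exp (- w * of_real x))"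
      by (intro cont_set_meas) (auto intro!: continuous_intros)
    show "AE x in lborel. x \<in> {0<..} \<longrightarrow> norm (exp (- w * of_real x)) \<le> norm (exp (- Re w * x))"
      by (auto simp: norm_exp_eq_Re)
  qed
  let ?F = "\<lambda>x::real. -(1 / w) * exp (- w * of_real x)"
  have D: "(?F has_vector_derivative exp (- w * of_real x)) (at x)" for x
  proof -
    have fd: "((\<lambda>z. -(1 / w) * exp (- w * z)) has_field_derivative exp (- w * of_real x)) (at (of_real x))"
      using wnz by (auto intro!: derivative_eq_intros simp: field_simps)
    have o: "(of_real has_vector_derivative (1::complex)) (at x)"
      by (rule has_vector_derivative_of_real[where f="\<lambda>x. x" and D=1, simplified])
    from field_vector_diff_chain_at[OF o fd] show ?thesis by (simp add: o_def)
  qed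
  have L0: "((?F \<circ> real_of_ereal) \<longlongrightarrow> -(1/w)) (at_right 0)"
    unfolding zero_ereal_def ereal_tendsto_simps using wnz
    by (auto intro!: tendsto_eq_intros)
  have e0: "((\<lambda>x::real. exp (- w * of_real x)) \<longlongrightarrow> 0) at_top"
  proof -
    have "((\<lambda>x::real. exp (- Re w * x)) \<longlongrightarrow> 0) at_top" using w by real_asymp
    then show ?thesis
      by (subst tendsto_norm_zero_iff[symmetric]) (simp add: norm_exp_eq_Re)
  qed
  have Li: "((?F \<circ> real_of_ereal) \<longlongrightarrow> 0) (at_left \<infinity>)"
    unfolding ereal_tendsto_simps using tendsto_mult[OF tendsto_const e0, of "-(1/w)"] by simp
  have "(LBINT x=0..\<infinity>. exp (- w * of_real x)) = 0 - (-(1/w))"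
    by (rule interval_integral_FTC_integrable[OF _ D _ _ L0 Li])
       (use I in \<open>auto simp: einterval_0_inf intro!: continuous_intros\<close>)
  then show "(LINT x:{0<..}|lborel. exp (- w * of_real x)) = 1 / w"
    by (simp add: interval_lebesgue_integral_0_infty)
qed

lemma complex_exp_integral':
  fixes w :: complex assumes w: "Re w > 0"
  shows "set_integrable lborel {0<..} (\<lambda>x::real. exp (- (w * of_real x)))"
    "(LINT x:{0<..}|lborel. exp (- (w * of_real x))) = 1 / w"
  using complex_exp_integral[OF w] by (simp_all only: minus_mult_left)




lemma norm_sinh_bound:
  fixes a :: complex and x :: real assumes x: "x \<ge> 0"
  shows "norm (sinh (a * of_real x)) \<le> norm a * x * exp (\<bar>Re a\<bar> * x)"
proof -
  define w where "w = a * of_real x"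
  have Rw: "\<bar>Re w\<bar> = \<bar>Re a\<bar> * x" using x by (simp add: w_def abs_mult)
  have nw: "norm w = norm a * x" using x by (simp add: w_def norm_mult)
  have "norm (exp w - exp (- w)) \<le> exp \<bar>Re w\<bar> * norm (w - (- w))"
  proof (rule field_differentiable_bound[of "closed_segment (-w) w" exp exp])
    show "convex (closed_segment (- w) w)" by simp
    show "(exp has_field_derivative exp z) (at z within closed_segment (- w) w)" for z
      by (rule DERIV_exp[THEN has_field_derivative_at_within])
    show "norm (exp z) \<le> exp \<bar>Re w\<bar>" if "z \<in> closed_segment (- w) w" for z
    proof -
      from that obtain u where u: "0 \<le> u" "u \<le> 1" "z = (1 - u) *\<^sub>R (- w) + u *\<^sub>R w"
        by (auto simp: closed_segment_def)
      have "Re z = (2*u - 1) * Re w" unfolding u(3) by (simp add: algebra_simps)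
      also have "\<dots> \<le> \<bar>Re w\<bar>"
      proof -
        have "\<bar>2*u - 1\<bar> \<le> 1" using u by auto
        then have "\<bar>(2*u - 1) * Re w\<bar> \<le> 1 * \<bar>Re w\<bar>" unfolding abs_mult
          by (intro mult_right_mono) auto
        then show ?thesis by simp
      qed
      finally show ?thesis by (simp add: norm_exp_eq_Re)
    qed
  qed auto
  then have "norm (sinh w) \<le> exp \<bar>Re w\<bar> * norm w"
    by (simp add: sinh_def norm_divide norm_mult)
  then show ?thesis using Rw nw by (simp add: w_def[symmetric] mult_ac)
qed

lemma norm_cosh_bound:
  fixes b :: complex and x :: real assumes x: "x \<ge> 0"
  shows "norm (cosh (b * of_real x)) \<le> exp (\<bar>Re b\<bar> * x)"
proof -
  have "norm (cosh (b * of_real x)) \<le> (norm (exp (b * of_real x)) + norm (exp (- (b * of_real x)))) / 2"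
    unfolding cosh_def using norm_triangle_ineq[of "exp (b * of_real x)" "exp (- (b * of_real x))"]
    by (simp add: divide_right_mono del: norm_exp_eq_Re)
  also have "\<dots> \<le> (exp (\<bar>Re b\<bar> * x) + exp (\<bar>Re b\<bar> * x)) / 2"
    using x by (intro divide_right_mono add_mono) (auto simp: norm_exp_eq_Re abs_mult intro!: mult_right_mono,
       metis abs_ge_minus_self minus_mult_left mult_right_mono)
  finally show ?thesis by simp
qed




lemma gchoose_neg_poch:
  fixes v :: complex
  shows "((- v) gchoose n) * (- E) ^ n = pochhammer v n / fact n * E ^ n"
proof -
  have "((- v) gchoose n) * (- E) ^ n = ((-1)^n * (-1)^n) * pochhammer v n / fact n * E ^ n"
    by (simp add: gbinomial_pochhammer power_minus[of E])
  also have "(-1::complex)^n * (-1)^n = 1" by (simp flip: power_add)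
  finally show ?thesis by simp
qed

lemma poch_abs_summable:
  fixes v :: complex and r :: real
  assumes "0 \<le> r" "r < 1"
  shows "summable (\<lambda>k. norm (pochhammer v k / fact k) * r ^ k)"
proof -
  have "ereal (norm (complex_of_real r)) < conv_radius (\<lambda>n. (- v) gchoose n)"
    using assms by (simp add: conv_radius_gchoose one_ereal_def)
  from abs_summable_in_conv_radius[OF this] have
    "summable (\<lambda>n. norm (((- v) gchoose n) * (- (- complex_of_real r)) ^ n))" by simp
  then have "summable (\<lambda>n. norm (pochhammer v n / fact n * (- complex_of_real r) ^ n))"
    by (simp only: gchoose_neg_poch)
  moreover have "norm (pochhammer v n * (- complex_of_real r) ^ n / fact n) =
      norm (pochhammer v n / fact n) * r ^ n" for n
    using assms by (simp add: norm_mult norm_power norm_divide)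
  ultimately show ?thesis by simp
qed

lemma series_inv_sinh_pow:
  fixes v c :: complex and x :: real
  assumes c: "Re c > 0" and x: "x > 0"
  shows "(\<lambda>k. 2 powr v * (pochhammer v k / fact k) * exp (- ((v + 2 * of_nat k) * c * of_real x)))
           sums (1 / sinh_pow v c x)"
proof -
  define E where "E = exp (-2 * c * of_real x)"
  have nE: "norm E < 1" using c x by (simp add: E_def)
  have "(\<lambda>n. ((- v) gchoose n) * (- E)^n) sums (1 + (- E)) powr (- v)"
    by (rule gen_binomial_complex) (use nE in simp)
  then have s: "(\<lambda>n. pochhammer v n / fact n * E^n) sums (1 - E) powr (- v)"
    unfolding gchoose_neg_poch by simp
  have S: "(\<lambda>n. (2 powr v * exp (- (v * c * of_real x))) * (pochhammer v n / fact n * E^n)) sums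
        ((2 powr v * exp (- (v * c * of_real x))) * (1 - E) powr (- v))"
    by (rule sums_mult[OF s])
  have T: "(2 powr v * exp (- (v * c * of_real x))) * (pochhammer v n / fact n * E^n) =
      2 powr v * (pochhammer v n / fact n) * exp (- ((v + 2 * of_nat n) * c * of_real x))" for n
  proof -
    have "E ^ n = exp (of_nat n * (-2 * c * of_real x))" unfolding E_def by (rule exp_of_nat_mult[symmetric])
    then have "exp (- (v * c * of_real x)) * E ^ n = exp (- ((v + 2 * of_nat n) * c * of_real x))"
      by (simp add: exp_add[symmetric] algebra_simps)
    then show ?thesis by (simp add: mult_ac)
  qed
  have U: "(2 powr v * exp (- (v * c * of_real x))) * (1 - E) powr (- v) = 1 / sinh_pow v c x"
    unfolding sinh_pow_def E_def by (simp add: powr_minus exp_minus field_simps)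
  show ?thesis using S unfolding T U .
qed

lemma poch_bound:
  fixes v :: complex
  obtains B where "B > 0" "\<And>n. n \<ge> 1 \<Longrightarrow>
     norm (pochhammer v (n+1) / fact (n+1)) \<le> B * real n powr (Re v) / real (n+1)"
proof -
  have "Bseq (rGamma_series v)"
    by (rule convergent_imp_Bseq) (use rGamma_series_LIMSEQ in \<open>auto simp: convergent_def\<close>)
  then obtain B where B: "B > 0" "\<And>n. norm (rGamma_series v n) \<le> B" by (auto elim: BseqE)
  have "norm (pochhammer v (n+1) / fact (n+1)) \<le> B * real n powr (Re v) / real (n+1)" if n: "n \<ge> 1" for n
  proof -
    have ne: "norm (exp (v * of_real (ln (real n)))) = real n powr Re v"
      using n by (simp add: powr_def)
    have ne2: "exp (Re v * ln (real n)) = real n powr Re v"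
      using n by (simp add: powr_def)
    have "norm (pochhammer v (n+1)) = norm (rGamma_series v n) * (fact n * real n powr Re v)"
      using n unfolding rGamma_series_def by (simp add: norm_divide norm_mult ne ne2)
    also have "\<dots> \<le> B * (fact n * real n powr Re v)"
      by (intro mult_right_mono B) auto
    finally have "norm (pochhammer v (n+1)) \<le> B * (fact n * real n powr Re v)" .
    moreover have "norm (fact (n+1) :: complex) = real (n+1) * fact n"
      by (simp only: norm_fact) (simp add: fact_Suc)
    ultimately have "norm (pochhammer v (n+1) / fact (n+1)) \<le> B * (fact n * real n powr Re v) / (real (n+1) * fact n)"
      by (simp only: norm_divide) (intro divide_right_mono, auto)
    also have "\<dots> = B * real n powr Re v / real (n+1)" by simp
    finally show ?thesis .
  qed
  with B that show ?thesis by blast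
qed




lemma summable_T:
  fixes v :: complex and d g :: real
  assumes d: "d > 0" and g: "g > 0" and v: "Re v < 2"
  shows "summable (\<lambda>k. norm (pochhammer v k / fact k) / (d + 2 * real k * g)\<^sup>2)"
proof -
  obtain B where B: "B > 0" "\<And>n. n \<ge> 1 \<Longrightarrow>
     norm (pochhammer v (n+1) / fact (n+1)) \<le> B * real n powr (Re v) / real (n+1)"
    by (rule poch_bound[of v]) blast
  let ?f = "\<lambda>k. norm (pochhammer v k / fact k) / (d + 2 * real k * g)\<^sup>2"
  have sg: "summable (\<lambda>n. B / (4 * g\<^sup>2) * real n powr (Re v - 3))"
    by (rule summable_mult) (use v in \<open>simp add: summable_real_powr_iff\<close>)
  have "summable (\<lambda>n. ?f (Suc n))"
  proof (rule summable_comparison_test'[OF sg])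
    fix n :: nat assume n: "n \<ge> 1"
    have np: "real n > 0" using n by auto
    have h1: "norm (pochhammer v (n+1) / fact (n+1)) \<le> B * real n powr (Re v) / real n"
      using B(2)[OF n] order_trans
      by (smt (verit) B(1) divide_left_mono mult_pos_pos np of_nat_Suc powr_gt_zero Suc_eq_plus1)
    have h2: "(d + 2 * real (Suc n) * g)\<^sup>2 \<ge> (2 * real n * g)\<^sup>2"
      using d g by (intro power_mono) (auto simp: algebra_simps)
    have h2': "(2 * real n * g)\<^sup>2 > 0" using np g by auto
    have "norm (?f (Suc n)) = norm (pochhammer v (n+1) / fact (n+1)) / (d + 2 * real (Suc n) * g)\<^sup>2"
      by simp
    also have "\<dots> \<le> (B * real n powr (Re v) / real n) / (2 * real n * g)\<^sup>2"
      by (intro frac_le h1 h2 h2') (use B(1) np in auto)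
    also have "\<dots> = B / (4 * g\<^sup>2) * (real n powr (Re v) / real n ^ 3)"
      by (simp add: power2_eq_square power3_eq_cube field_simps)
    also have "real n powr (Re v) / real n ^ 3 = real n powr (Re v - 3)"
      using np by (simp add: powr_diff powr_realpow)
    finally show "norm (?f (Suc n)) \<le> B / (4 * g\<^sup>2) * real n powr (Re v - 3)" .
  qed
  then show ?thesis using summable_Suc_iff[where f="?f"] by blast
qed




lemma sc_exp_identity:
  fixes a b W :: complex and x :: real
  shows "sinh (a * of_real x) * cosh (b * of_real x) * exp (- (W * of_real x)) =
    (exp (- ((W - a - b) * of_real x)) + exp (- ((W - a + b) * of_real x))
     - exp (- ((W + a - b) * of_real x)) - exp (- ((W + a + b) * of_real x))) / 4"
proof -
  let ?x = "complex_of_real x"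
  have e1: "exp (- ((W - a - b) * ?x)) = exp (a * ?x) * exp (b * ?x) * exp (- (W * ?x))"
    by (simp add: mult_exp_exp algebra_simps)
  have e2: "exp (- ((W - a + b) * ?x)) = exp (a * ?x) * exp (- (b * ?x)) * exp (- (W * ?x))"
    by (simp add: mult_exp_exp algebra_simps)
  have e3: "exp (- ((W + a - b) * ?x)) = exp (- (a * ?x)) * exp (b * ?x) * exp (- (W * ?x))"
    by (simp add: mult_exp_exp algebra_simps)
  have e4: "exp (- ((W + a + b) * ?x)) = exp (- (a * ?x)) * exp (- (b * ?x)) * exp (- (W * ?x))"
    by (simp add: mult_exp_exp algebra_simps)
  show ?thesis
    unfolding e1 e2 e3 e4 sinh_field_def cosh_field_def
    by (simp add: field_simps)
qed

lemma term_integral: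
  fixes a b W :: complex
  assumes r1: "Re (W - a - b) > 0" and r2: "Re (W - a + b) > 0"
      and r3: "Re (W + a - b) > 0" and r4: "Re (W + a + b) > 0"
  shows "set_integrable lborel {0<..} (\<lambda>x::real. sinh (a * of_real x) * cosh (b * of_real x) * exp (- (W * of_real x)))"
    "(LINT x:{0<..}|lborel. sinh (a * of_real x) * cosh (b * of_real x) * exp (- (W * of_real x)))
       = (1/(W-a-b) + 1/(W-a+b) - 1/(W+a-b) - 1/(W+a+b)) / 4"
proof -
  note i1 = complex_exp_integral'[OF r1] and i2 = complex_exp_integral'[OF r2]
   and i3 = complex_exp_integral'[OF r3] and i4 = complex_exp_integral'[OF r4]
  have eq: "(\<lambda>x::real. sinh (a * of_real x) * cosh (b * of_real x) * exp (- (W * of_real x))) =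
     (\<lambda>x. (exp (- ((W - a - b) * of_real x)) + exp (- ((W - a + b) * of_real x))
     - exp (- ((W + a - b) * of_real x)) - exp (- ((W + a + b) * of_real x))) / 4)"
    by (rule ext, rule sc_exp_identity)
  have I12: "set_integrable lborel {0<..} (\<lambda>x::real. exp (- ((W - a - b) * of_real x)) + exp (- ((W - a + b) * of_real x)))"
    using set_integral_add(1)[OF i1(1) i2(1)] .
  have I123: "set_integrable lborel {0<..} (\<lambda>x::real. exp (- ((W - a - b) * of_real x)) + exp (- ((W - a + b) * of_real x))
     - exp (- ((W + a - b) * of_real x)))"
    using set_integral_diff(1)[OF I12 i3(1)] .
  have I1234: "set_integrable lborel {0<..} (\<lambda>x::real. exp (- ((W - a - b) * of_real x)) + exp (- ((W - a + b) * of_real x))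
     - exp (- ((W + a - b) * of_real x)) - exp (- ((W + a + b) * of_real x)))"
    using set_integral_diff(1)[OF I123 i4(1)] .
  show "set_integrable lborel {0<..} (\<lambda>x::real. sinh (a * of_real x) * cosh (b * of_real x) * exp (- (W * of_real x)))"
    unfolding eq by (rule set_integrable_divide) (rule I1234)
  have "(LINT x:{0<..}|lborel. exp (- ((W - a - b) * of_real x)) + exp (- ((W - a + b) * of_real x))
     - exp (- ((W + a - b) * of_real x)) - exp (- ((W + a + b) * of_real x))) =
     1/(W-a-b) + 1/(W-a+b) - 1/(W+a-b) - 1/(W+a+b)"
    unfolding set_integral_diff(2)[OF I123 i4(1)] set_integral_diff(2)[OF I12 i3(1)]
       set_integral_add(2)[OF i1(1) i2(1)] i1(2) i2(2) i3(2) i4(2) ..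
  then show "(LINT x:{0<..}|lborel. sinh (a * of_real x) * cosh (b * of_real x) * exp (- (W * of_real x)))
       = (1/(W-a-b) + 1/(W-a+b) - 1/(W+a-b) - 1/(W+a+b)) / 4"
    unfolding eq by simp
qed




lemma poch_shift:
  fixes s :: complex
  shows "pochhammer (1 + s) n * s = (s + of_nat n) * pochhammer s n"
  using pochhammer_rec[of s n] pochhammer_rec'[of s n] by (simp add: add.commute mult.commute)

lemma nonpos_Ints_poch_nz:
  fixes s :: complex
  shows "s \<notin> \<int>\<^sub>\<le>\<^sub>0 \<Longrightarrow> pochhammer s n \<noteq> 0"
  by (auto simp: pochhammer_eq_0_iff)

lemma ratio_abs:
  fixes p A1 A2 A3 A4 A5 A6 s1 s2 s3 s4 s5 s6 t1 t2 t3 t4 t5 t6 :: complex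
  assumes "A1 \<noteq> 0" "A2 \<noteq> 0" "A3 \<noteq> 0" "A4 \<noteq> 0" "A5 \<noteq> 0" "A6 \<noteq> 0"
    "s1 \<noteq> 0" "s2 \<noteq> 0" "s3 \<noteq> 0" "s4 \<noteq> 0" "s5 \<noteq> 0" "s6 \<noteq> 0"
    "t3 \<noteq> 0" "t4 \<noteq> 0" "t5 \<noteq> 0" "t6 \<noteq> 0"
  shows "(p * (t1 * A1 / s1) * (t2 * A2 / s2) * A3 * A4 * A5 * A6) /
         (A1 * A2 * (t3 * A3 / s3) * (t4 * A4 / s4) * (t5 * A5 / s5) * (t6 * A6 / s6)) =
         p * ((t1 * t2) / (s1 * s2)) * ((s3 * s4 * s5 * s6) / (t3 * t4 * t5 * t6))"
  using assms by (simp add: field_simps)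

lemma four_frac:
  fixes d1 d2 d3 d4 :: complex
  assumes "d1 \<noteq> 0" "d2 \<noteq> 0" "d3 \<noteq> 0" "d4 \<noteq> 0"
  shows "(1/d1 + 1/d2 - 1/d3 - 1/d4) / 4 =
    (d2*d3*d4 + d1*d3*d4 - d1*d2*d4 - d1*d2*d3) / (4 * (d1*d4*d2*d3))"
  using assms by (simp add: field_simps)

lemma final_abs:
  fixes p f a X Y P Q m k :: complex and n :: nat
  assumes "f \<noteq> 0" "Y \<noteq> 0" "P \<noteq> 0" "Q \<noteq> 0" "m \<noteq> 0" "k \<noteq> 0"
  shows "p / f * (a * X / Q) = a * Y / P * (p * ((X/m)/(Y/m)) * ((P/k)/(Q/k)) * 1^n / f)"
  using assms by (simp add: field_simps)

lemma term_identity: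
  fixes v a b c s :: complex and n :: nat
  defines "\<sigma>1 \<equiv> v/2 - s/(2*c)" and "\<sigma>2 \<equiv> v/2 + s/(2*c)"
      and "\<sigma>3 \<equiv> v/2 - a/(2*c) - b/(2*c)" and "\<sigma>4 \<equiv> v/2 - a/(2*c) + b/(2*c)"
      and "\<sigma>5 \<equiv> v/2 + a/(2*c) + b/(2*c)" and "\<sigma>6 \<equiv> v/2 + a/(2*c) - b/(2*c)"
      and "W \<equiv> (v + 2 * of_nat n) * c"
  assumes c: "c \<noteq> 0" and hs: "s\<^sup>2 = a\<^sup>2 - b\<^sup>2"
    and p1: "v * c - a - b \<noteq> 0" and p2: "v * c + a + b \<noteq> 0"
    and p3: "v * c - a + b \<noteq> 0" and p4: "v * c + a - b \<noteq> 0"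
    and q1: "W - a - b \<noteq> 0" and q2: "W - a + b \<noteq> 0"
    and q3: "W + a - b \<noteq> 0" and q4: "W + a + b \<noteq> 0"
    and g1: "\<sigma>1 \<notin> \<int>\<^sub>\<le>\<^sub>0" and g2: "\<sigma>2 \<notin> \<int>\<^sub>\<le>\<^sub>0"
    and g3: "1 + \<sigma>3 \<notin> \<int>\<^sub>\<le>\<^sub>0" and g4: "1 + \<sigma>4 \<notin> \<int>\<^sub>\<le>\<^sub>0"
    and g5: "1 + \<sigma>5 \<notin> \<int>\<^sub>\<le>\<^sub>0" and g6: "1 + \<sigma>6 \<notin> \<int>\<^sub>\<le>\<^sub>0"
  shows "pochhammer v n / fact n * ((1/(W-a-b) + 1/(W-a+b) - 1/(W+a-b) - 1/(W+a+b)) / 4) =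
     (v\<^sup>2 * a * c\<^sup>2 - a^3 + a * b\<^sup>2) /
       ((v * c - a - b) * (v * c + a + b) * (v * c - a + b) * (v * c + a - b)) *
     ((\<Prod>x\<leftarrow>[v, 1 + \<sigma>1, 1 + \<sigma>2, \<sigma>3, \<sigma>4, \<sigma>5, \<sigma>6]. pochhammer x n) /
      (\<Prod>x\<leftarrow>[\<sigma>1, \<sigma>2, 1 + \<sigma>3, 1 + \<sigma>4, 1 + \<sigma>5, 1 + \<sigma>6]. pochhammer x n) * 1 ^ n / fact n)"
proof -
  define A1 where "A1 = pochhammer \<sigma>1 n"
  define A2 where "A2 = pochhammer \<sigma>2 n"
  define A3 where "A3 = pochhammer \<sigma>3 n"
  define A4 where "A4 = pochhammer \<sigma>4 n"
  define A5 where "A5 = pochhammer \<sigma>5 n"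
  define A6 where "A6 = pochhammer \<sigma>6 n"
  have s3: "\<sigma>3 = (v * c - a - b) / (2*c)" and s4: "\<sigma>4 = (v * c - a + b) / (2*c)"
   and s5: "\<sigma>5 = (v * c + a + b) / (2*c)" and s6: "\<sigma>6 = (v * c + a - b) / (2*c)"
    using c by (simp_all add: \<sigma>3_def \<sigma>4_def \<sigma>5_def \<sigma>6_def field_simps)
  have t3: "\<sigma>3 + of_nat n = (W - a - b) / (2*c)" and t4: "\<sigma>4 + of_nat n = (W - a + b) / (2*c)"
   and t5: "\<sigma>5 + of_nat n = (W + a + b) / (2*c)" and t6: "\<sigma>6 + of_nat n = (W + a - b) / (2*c)"
    using c by (simp_all add: \<sigma>3_def \<sigma>4_def \<sigma>5_def \<sigma>6_def W_def field_simps)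
  have t1: "(\<sigma>1 + of_nat n) * (\<sigma>2 + of_nat n) = (W\<^sup>2 - s\<^sup>2) / (4 * c\<^sup>2)"
    using c by (simp add: \<sigma>1_def \<sigma>2_def W_def field_simps power2_eq_square)
  have t0: "\<sigma>1 * \<sigma>2 = ((v * c)\<^sup>2 - s\<^sup>2) / (4 * c\<^sup>2)"
    using c by (simp add: \<sigma>1_def \<sigma>2_def field_simps power2_eq_square)
  have n1: "\<sigma>1 \<noteq> 0" and n2: "\<sigma>2 \<noteq> 0" using g1 g2 by auto
  have n3: "\<sigma>3 \<noteq> 0" and n4: "\<sigma>4 \<noteq> 0" and n5: "\<sigma>5 \<noteq> 0" and n6: "\<sigma>6 \<noteq> 0"
    using c p1 p2 p3 p4 by (simp_all add: s3 s4 s5 s6)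
  have B1: "pochhammer (1 + \<sigma>1) n = (\<sigma>1 + of_nat n) * A1 / \<sigma>1"
    using poch_shift[of \<sigma>1 n] n1 unfolding A1_def by (simp add: field_simps)
  have B2: "pochhammer (1 + \<sigma>2) n = (\<sigma>2 + of_nat n) * A2 / \<sigma>2"
    using poch_shift[of \<sigma>2 n] n2 unfolding A2_def by (simp add: field_simps)
  have B3: "pochhammer (1 + \<sigma>3) n = (\<sigma>3 + of_nat n) * A3 / \<sigma>3"
    using poch_shift[of \<sigma>3 n] n3 unfolding A3_def by (simp add: field_simps)
  have B4: "pochhammer (1 + \<sigma>4) n = (\<sigma>4 + of_nat n) * A4 / \<sigma>4"
    using poch_shift[of \<sigma>4 n] n4 unfolding A4_def by (simp add: field_simps)
  have B5: "pochhammer (1 + \<sigma>5) n = (\<sigma>5 + of_nat n) * A5 / \<sigma>5"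
    using poch_shift[of \<sigma>5 n] n5 unfolding A5_def by (simp add: field_simps)
  have B6: "pochhammer (1 + \<sigma>6) n = (\<sigma>6 + of_nat n) * A6 / \<sigma>6"
    using poch_shift[of \<sigma>6 n] n6 unfolding A6_def by (simp add: field_simps)
  have a1: "A1 \<noteq> 0" using g1 unfolding A1_def by (rule nonpos_Ints_poch_nz)
  have a2: "A2 \<noteq> 0" using g2 unfolding A2_def by (rule nonpos_Ints_poch_nz)
  have a3: "A3 \<noteq> 0" using nonpos_Ints_poch_nz[OF g3, of n] n3 by (auto simp: B3)
  have a4: "A4 \<noteq> 0" using nonpos_Ints_poch_nz[OF g4, of n] n4 by (auto simp: B4)
  have a5: "A5 \<noteq> 0" using nonpos_Ints_poch_nz[OF g5, of n] n5 by (auto simp: B5)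
  have a6: "A6 \<noteq> 0" using nonpos_Ints_poch_nz[OF g6, of n] n6 by (auto simp: B6)
  have tn3: "\<sigma>3 + of_nat n \<noteq> 0" using q1 c by (simp add: t3)
  have tn4: "\<sigma>4 + of_nat n \<noteq> 0" using q2 c by (simp add: t4)
  have tn5: "\<sigma>5 + of_nat n \<noteq> 0" using q4 c by (simp add: t5)
  have tn6: "\<sigma>6 + of_nat n \<noteq> 0" using q3 c by (simp add: t6)
  have ratio: "(\<Prod>x\<leftarrow>[v, 1 + \<sigma>1, 1 + \<sigma>2, \<sigma>3, \<sigma>4, \<sigma>5, \<sigma>6]. pochhammer x n) /
      (\<Prod>x\<leftarrow>[\<sigma>1, \<sigma>2, 1 + \<sigma>3, 1 + \<sigma>4, 1 + \<sigma>5, 1 + \<sigma>6]. pochhammer x n) =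
      pochhammer v n * (((\<sigma>1 + of_nat n) * (\<sigma>2 + of_nat n)) / (\<sigma>1 * \<sigma>2)) *
      ((\<sigma>3 * \<sigma>4 * \<sigma>5 * \<sigma>6) / ((\<sigma>3 + of_nat n) * (\<sigma>4 + of_nat n) * (\<sigma>5 + of_nat n) * (\<sigma>6 + of_nat n)))"
    (is "_ = ?R")
  proof -
    have "(\<Prod>x\<leftarrow>[v, 1 + \<sigma>1, 1 + \<sigma>2, \<sigma>3, \<sigma>4, \<sigma>5, \<sigma>6]. pochhammer x n) /
      (\<Prod>x\<leftarrow>[\<sigma>1, \<sigma>2, 1 + \<sigma>3, 1 + \<sigma>4, 1 + \<sigma>5, 1 + \<sigma>6]. pochhammer x n) =
      (pochhammer v n * pochhammer (1 + \<sigma>1) n * pochhammer (1 + \<sigma>2) n * A3 * A4 * A5 * A6) /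
      (A1 * A2 * pochhammer (1 + \<sigma>3) n * pochhammer (1 + \<sigma>4) n * pochhammer (1 + \<sigma>5) n * pochhammer (1 + \<sigma>6) n)"
      by (simp add: A1_def A2_def A3_def A4_def A5_def A6_def mult_ac)
    also have "\<dots> = ?R"
      unfolding B1 B2 B3 B4 B5 B6
      by (rule ratio_abs; fact)
    finally show ?thesis .
  qed
  have P4: "\<sigma>3 * \<sigma>4 * \<sigma>5 * \<sigma>6 = ((v * c - a - b) * (v * c + a + b) * (v * c - a + b) * (v * c + a - b)) / (2*c)^4"
    by (simp add: s3 s4 s5 s6 field_simps power4_eq_xxxx)
  have Q4: "(\<sigma>3 + of_nat n) * (\<sigma>4 + of_nat n) * (\<sigma>5 + of_nat n) * (\<sigma>6 + of_nat n) =
      ((W - a - b) * (W + a + b) * (W - a + b) * (W + a - b)) / (2*c)^4"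
    by (simp add: t3 t4 t5 t6 field_simps power4_eq_xxxx)
  have vs: "(v * c)\<^sup>2 - s\<^sup>2 \<noteq> 0" using n1 n2 t0 c by auto
  have N: "v\<^sup>2 * a * c\<^sup>2 - a^3 + a * b\<^sup>2 = a * ((v * c)\<^sup>2 - s\<^sup>2)"
    using hs by (simp add: algebra_simps power2_eq_square power3_eq_cube) (metis distrib_left)
  have J: "(1/(W-a-b) + 1/(W-a+b) - 1/(W+a-b) - 1/(W+a+b)) / 4 =
      a * (W\<^sup>2 - s\<^sup>2) / ((W - a - b) * (W + a + b) * (W - a + b) * (W + a - b))"
  proof -
    have "(W - a + b) * (W + a - b) * (W + a + b) + (W - a - b) * (W + a - b) * (W + a + b) -
          (W - a - b) * (W - a + b) * (W + a + b) - (W - a - b) * (W - a + b) * (W + a - b)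
          = 4 * (a * (W\<^sup>2 - s\<^sup>2))"
      unfolding hs by algebra
    then show ?thesis
      unfolding four_frac[OF q1 q2 q3 q4] using q1 q2 q3 q4 by simp
  qed
  show ?thesis
    unfolding ratio t1 t0 P4 Q4 N J
    by (rule final_abs) (use c vs p1 p2 p3 p4 q1 q2 q3 q4 in auto)
qed




lemma norm_exp_term:
  fixes v c :: complex and x :: real and k :: nat
  shows "norm (exp (- ((v + 2 * of_nat k) * c * of_real x))) = exp (- ((Re (v * c) + 2 * real k * Re c) * x))"
  by (simp add: norm_exp_eq_Re algebra_simps)

lemma fk_bound:
  fixes v a b c :: complex and x :: real and k :: nat
  assumes x: "x > 0"
  shows "norm (sinh (a * of_real x) * cosh (b * of_real x) * exp (- ((v + 2 * of_nat k) * c * of_real x)))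
     \<le> norm a * (x * exp (- ((Re (v * c) - \<bar>Re a\<bar> - \<bar>Re b\<bar>) + 2 * real k * Re c) * x))"
proof -
  have "norm (sinh (a * of_real x) * cosh (b * of_real x) * exp (- ((v + 2 * of_nat k) * c * of_real x)))
      = norm (sinh (a * of_real x)) * norm (cosh (b * of_real x)) * exp (- ((Re (v * c) + 2 * real k * Re c) * x))"
    by (simp only: norm_mult norm_exp_term)
  also have "\<dots> \<le> (norm a * x * exp (\<bar>Re a\<bar> * x)) * exp (\<bar>Re b\<bar> * x) * exp (- ((Re (v * c) + 2 * real k * Re c) * x))"
    using x by (intro mult_right_mono mult_mono norm_sinh_bound norm_cosh_bound) auto
  also have "\<dots> = norm a * (x * exp (- ((Re (v * c) - \<bar>Re a\<bar> - \<bar>Re b\<bar>) + 2 * real k * Re c) * x))"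
    by (simp add: mult_exp_exp algebra_simps)
  finally show ?thesis .
qed




theorem mainTheorem16:
  fixes v a b c s :: complex
  assumes hv: "Re v < 2" and hc: "Re c > 0"
    and h1: "Re (v * c + a + b) > 0" and h2: "Re (v * c + a - b) > 0"
    and h3: "Re (v * c - a + b) > 0" and h4: "Re (v * c - a - b) > 0"
    and hs: "s\<^sup>2 = a\<^sup>2 - b\<^sup>2"
    and hsig: "v/2 - s/(2*c) \<notin> \<int>\<^sub>\<le>\<^sub>0" "v/2 + s/(2*c) \<notin> \<int>\<^sub>\<le>\<^sub>0"
      "1 + (v/2 - a/(2*c) - b/(2*c)) \<notin> \<int>\<^sub>\<le>\<^sub>0"
      "1 + (v/2 - a/(2*c) + b/(2*c)) \<notin> \<int>\<^sub>\<le>\<^sub>0"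
      "1 + (v/2 + a/(2*c) + b/(2*c)) \<notin> \<int>\<^sub>\<le>\<^sub>0"
      "1 + (v/2 + a/(2*c) - b/(2*c)) \<notin> \<int>\<^sub>\<le>\<^sub>0"
  shows "((\<lambda>x::real. sinh (a * of_real x) * cosh (b * of_real x) / sinh_pow v c x)
          has_integral
          (let \<sigma>1 = v/2 - s/(2*c); \<sigma>2 = v/2 + s/(2*c);
               \<sigma>3 = v/2 - a/(2*c) - b/(2*c); \<sigma>4 = v/2 - a/(2*c) + b/(2*c);
               \<sigma>5 = v/2 + a/(2*c) + b/(2*c); \<sigma>6 = v/2 + a/(2*c) - b/(2*c);
               P = (v * c - a - b) * (v * c + a + b) * (v * c - a + b) * (v * c + a - b)
           in 2 powr v * (v\<^sup>2 * a * c\<^sup>2 - a^3 + a * b\<^sup>2) / P *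
              hypergeo [v, 1 + \<sigma>1, 1 + \<sigma>2, \<sigma>3, \<sigma>4, \<sigma>5, \<sigma>6]
                       [\<sigma>1, \<sigma>2, 1 + \<sigma>3, 1 + \<sigma>4, 1 + \<sigma>5, 1 + \<sigma>6] 1))
         {0<..}"
proof -
  define g where "g = Re c"
  define d where "d = Re (v * c) - \<bar>Re a\<bar> - \<bar>Re b\<bar>"
  have g: "g > 0" using hc by (simp add: g_def)
  have d: "d > 0" using h1 h2 h3 h4 unfolding d_def by (simp add: abs_if) linarith?
  define C where "C k = 2 powr v * (pochhammer v k / fact k)" for k :: nat
  define e where "e k x = sinh (a * of_real x) * cosh (b * of_real x) * exp (- ((v + 2 * of_nat k) * c * of_real x))"
    for k :: nat and x :: real
  define fk where "fk k x = C k * e k x" for k x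
  define F where "F x = sinh (a * of_real x) * cosh (b * of_real x) / sinh_pow v c x" for x :: real
  define h where "h k x = indicator {0<..} x *\<^sub>R fk k x" for k x
  define J where "J k = (let W = (v + 2 * of_nat k) * c in (1/(W-a-b) + 1/(W-a+b) - 1/(W+a-b) - 1/(W+a+b)) / 4)" for k :: nat
  have ReW: "Re ((v + 2 * of_nat k) * c - a - b) > 0" "Re ((v + 2 * of_nat k) * c - a + b) > 0"
            "Re ((v + 2 * of_nat k) * c + a - b) > 0" "Re ((v + 2 * of_nat k) * c + a + b) > 0" for k :: nat
  proof -
    have "Re ((v + 2 * of_nat k) * c) = Re (v * c) + 2 * real k * Re c" by (simp add: algebra_simps)
    then show "Re ((v + 2 * of_nat k) * c - a - b) > 0" "Re ((v + 2 * of_nat k) * c - a + b) > 0"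
            "Re ((v + 2 * of_nat k) * c + a - b) > 0" "Re ((v + 2 * of_nat k) * c + a + b) > 0"
      using h1 h2 h3 h4 hc by (simp_all add: add_pos_nonneg) (smt (verit) of_nat_0_le_iff mult_nonneg_nonneg)+
  qed
  have ek: "set_integrable lborel {0<..} (e k)" "(LINT x:{0<..}|lborel. e k x) = J k" for k
    using term_integral[OF ReW(1)[of k] ReW(2)[of k] ReW(3)[of k] ReW(4)[of k]]
    unfolding e_def J_def Let_def by (simp_all add: mult.assoc)
  have fki: "set_integrable lborel {0<..} (fk k)" for k
    unfolding fk_def[abs_def] using ek(1) by (rule set_integrable_mult_right)
  have fkI: "(LINT x:{0<..}|lborel. fk k x) = C k * J k" for k
    unfolding fk_def using ek(2) by simp
  have hi: "integrable lborel (h k)" for k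
    using fki[of k] unfolding set_integrable_def h_def[abs_def] .
  have hsum: "summable (\<lambda>k. norm (h k x))" for x
  proof (cases "x > 0")
    case False
    then show ?thesis by (simp add: h_def)
  next
    case True
    define r where "r = exp (- 2 * Re c * x)"
    have r: "0 \<le> r" "r < 1" using True hc by (auto simp: r_def)
    have eq: "norm (h k x) = (norm (sinh (a * of_real x) * cosh (b * of_real x)) * norm (2 powr v :: complex)
        * exp (- (Re (v * c) * x))) * (norm (pochhammer v k / fact k) * r ^ k)" for k
    proof -
      have ex: "exp (- ((Re (v * c) + 2 * real k * Re c) * x)) = exp (- (Re (v * c) * x)) * r ^ k"
        unfolding r_def by (simp add: exp_of_nat_mult[symmetric] mult_exp_exp algebra_simps)
      have "norm (h k x) = norm (fk k x)" using True by (simp add: h_def)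
      also have "\<dots> = norm (2 powr v :: complex) * norm (pochhammer v k / fact k) *
         (norm (sinh (a * of_real x) * cosh (b * of_real x)) * exp (- ((Re (v * c) + 2 * real k * Re c) * x)))"
        unfolding fk_def C_def e_def by (simp only: norm_mult norm_exp_term)
      finally show ?thesis unfolding ex by (simp only: mult_ac)
    qed
    show ?thesis unfolding eq by (rule summable_mult[OF poch_abs_summable[OF r]])
  qed
  define G where "G k x = norm (2 powr v :: complex) * norm (pochhammer v k / fact k) * norm a *
      (x * exp (- (d + 2 * real k * g) * x))" for k :: nat and x :: real
  have Wpos: "d + 2 * real k * g > 0" for k using d g by (simp add: add_pos_nonneg)
  have Gi: "set_integrable lborel {0<..} (G k)" for k
    unfolding G_def[abs_def] using real_xexp_integral(1)[OF Wpos[of k]] by (rule set_integrable_mult_right)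
  have GI: "(LINT x:{0<..}|lborel. G k x) = norm (2 powr v :: complex) * norm a *
       (norm (pochhammer v k / fact k) / (d + 2 * real k * g)\<^sup>2)" for k
    unfolding G_def using real_xexp_integral(2)[OF Wpos[of k]] by simp
  have hG: "norm (h k x) \<le> indicator {0<..} x *\<^sub>R G k x" for k x
  proof (cases "x > 0")
    case False then show ?thesis by (simp add: h_def)
  next
    case True
    have "norm (e k x) \<le> norm a * (x * exp (- (d + 2 * real k * g) * x))"
      using fk_bound[OF True, of a b v k c] unfolding e_def d_def g_def by simp
    then have "norm (fk k x) \<le> norm (C k) * (norm a * (x * exp (- (d + 2 * real k * g) * x)))"
      unfolding fk_def norm_mult by (intro mult_left_mono) auto
    also have "\<dots> = G k x" unfolding G_def C_def norm_mult by (simp add: mult_ac)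
    finally show ?thesis using True by (simp add: h_def)
  qed
  have intnorm: "(\<integral>x. norm (h k x) \<partial>lborel) \<le> norm (2 powr v :: complex) * norm a *
       (norm (pochhammer v k / fact k) / (d + 2 * real k * g)\<^sup>2)" for k
  proof -
    have "(\<integral>x. norm (h k x) \<partial>lborel) \<le> (\<integral>x. indicator {0<..} x *\<^sub>R G k x \<partial>lborel)"
      using hi[of k] Gi[of k] hG unfolding set_integrable_def
      by (intro integral_mono) auto
    also have "\<dots> = (LINT x:{0<..}|lborel. G k x)" by (simp add: set_lebesgue_integral_def)
    finally show ?thesis unfolding GI .
  qed
  have sumint: "summable (\<lambda>k. \<integral>x. norm (h k x) \<partial>lborel)"
  proof (rule summable_comparison_test'[OF summable_mult[OF summable_T[OF d g hv]]])
    fix k :: nat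
    show "norm (\<integral>x. norm (h k x) \<partial>lborel) \<le> norm (2 powr v :: complex) * norm a *
       (norm (pochhammer v k / fact k) / (d + 2 * real k * g)\<^sup>2)"
      using intnorm[of k] by (simp add: integral_nonneg_AE)
  qed
  have hm: "h k \<in> borel_measurable lborel" for k using hi[of k] by auto
  have AEs: "AE x in lborel. summable (\<lambda>k. norm (h k x))" using hsum by simp
  have Ssum: "(\<Sum>k. h k x) = indicator {0<..} x *\<^sub>R F x" for x
  proof (cases "x > 0")
    case False then show ?thesis by (simp add: h_def)
  next
    case True
    have "(\<lambda>k. sinh (a * of_real x) * cosh (b * of_real x) *
            (2 powr v * (pochhammer v k / fact k) * exp (- ((v + 2 * of_nat k) * c * of_real x))))
          sums (sinh (a * of_real x) * cosh (b * of_real x) * (1 / sinh_pow v c x))"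
      by (rule sums_mult[OF series_inv_sinh_pow[OF hc True]])
    moreover have "sinh (a * of_real x) * cosh (b * of_real x) *
            (2 powr v * (pochhammer v k / fact k) * exp (- ((v + 2 * of_nat k) * c * of_real x))) = h k x" for k
      using True unfolding h_def fk_def C_def e_def by (simp add: mult_ac)
    moreover have "sinh (a * of_real x) * cosh (b * of_real x) * (1 / sinh_pow v c x) =
        indicator {0<..} x *\<^sub>R F x" using True unfolding F_def by simp
    ultimately show ?thesis by (simp add: sums_iff)
  qed
  have Fint: "set_integrable lborel {0<..} F"
    using integrable_suminf[OF hi AEs sumint] unfolding Ssum set_integrable_def .
  have Fsums: "(\<lambda>k. C k * J k) sums (LINT x:{0<..}|lborel. F x)"
  proof -
    have "(\<lambda>k. integral\<^sup>L lborel (h k)) sums (\<integral>x. (\<Sum>k. h k x) \<partial>lborel)"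
      by (rule sums_integral[OF hi AEs sumint])
    moreover have "integral\<^sup>L lborel (h k) = C k * J k" for k
      using fkI[of k] unfolding set_lebesgue_integral_def h_def[abs_def] .
    ultimately show ?thesis unfolding Ssum set_lebesgue_integral_def by simp
  qed
  have HK: "(F has_integral (LINT x:{0<..}|lborel. F x)) {0<..}"
    using set_borel_integral_eq_integral[OF Fint] by (simp add: integrable_integral)
  define P where "P = (v * c - a - b) * (v * c + a + b) * (v * c - a + b) * (v * c + a - b)"
  define K where "K = 2 powr v * (v\<^sup>2 * a * c\<^sup>2 - a^3 + a * b\<^sup>2) / P"
  define as where "as = [v, 1 + (v/2 - s/(2*c)), 1 + (v/2 + s/(2*c)), v/2 - a/(2*c) - b/(2*c),
     v/2 - a/(2*c) + b/(2*c), v/2 + a/(2*c) + b/(2*c), v/2 + a/(2*c) - b/(2*c)]"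
  define bs where "bs = [v/2 - s/(2*c), v/2 + s/(2*c), 1 + (v/2 - a/(2*c) - b/(2*c)),
     1 + (v/2 - a/(2*c) + b/(2*c)), 1 + (v/2 + a/(2*c) + b/(2*c)), 1 + (v/2 + a/(2*c) - b/(2*c))]"
  define ht where "ht n = (\<Prod>x\<leftarrow>as. pochhammer x n) / (\<Prod>x\<leftarrow>bs. pochhammer x n) * 1 ^ n / fact n" for n :: nat
  have cnz: "c \<noteq> 0" using hc by auto
  have pnz: "v * c - a - b \<noteq> 0" "v * c + a + b \<noteq> 0" "v * c - a + b \<noteq> 0" "v * c + a - b \<noteq> 0"
    using h4 apply (cases "v * c - a - b = 0") apply auto[2]
    using h1 apply (cases "v * c + a + b = 0") apply auto[2]
    using h3 apply (cases "v * c - a + b = 0") apply auto[2]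
    using h2 apply (cases "v * c + a - b = 0") apply auto[2]
    done
  have qnz: "(v + 2 * of_nat k) * c - a - b \<noteq> 0" "(v + 2 * of_nat k) * c - a + b \<noteq> 0"
     "(v + 2 * of_nat k) * c + a - b \<noteq> 0" "(v + 2 * of_nat k) * c + a + b \<noteq> 0" for k :: nat
    using ReW(1)[of k] apply (cases "(v + 2 * of_nat k) * c - a - b = 0") apply auto[2]
    using ReW(2)[of k] apply (cases "(v + 2 * of_nat k) * c - a + b = 0") apply auto[2]
    using ReW(3)[of k] apply (cases "(v + 2 * of_nat k) * c + a - b = 0") apply auto[2]
    using ReW(4)[of k] apply (cases "(v + 2 * of_nat k) * c + a + b = 0") apply auto[2]
    done
  have CJ: "C k * J k = K * ht k" for k
  proof -
    have eq: "pochhammer v k / fact k * J k = (v\<^sup>2 * a * c\<^sup>2 - a^3 + a * b\<^sup>2) / P * ht k"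
      unfolding J_def Let_def P_def ht_def as_def bs_def
      by (rule term_identity[OF cnz hs pnz qnz hsig])
    have "C k * J k = 2 powr v * (pochhammer v k / fact k * J k)" unfolding C_def by (simp only: mult_ac)
    also have "\<dots> = 2 powr v * ((v\<^sup>2 * a * c\<^sup>2 - a^3 + a * b\<^sup>2) / P * ht k)" unfolding eq ..
    also have "\<dots> = K * ht k" unfolding K_def by simp
    finally show ?thesis .
  qed
  have Ksums: "(\<lambda>k. K * ht k) sums (LINT x:{0<..}|lborel. F x)"
    using Fsums unfolding CJ .
  have final: "(LINT x:{0<..}|lborel. F x) = K * hypergeo as bs 1"
  proof (cases "K = 0")
    case True
    then show ?thesis using Ksums by (simp add: sums_iff)
  next
    case False
    have "(\<lambda>k. ht k) sums ((LINT x:{0<..}|lborel. F x) / K)"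
      using sums_divide[OF Ksums, of K] False by simp
    then have "hypergeo as bs 1 = (LINT x:{0<..}|lborel. F x) / K"
      unfolding hypergeo_def ht_def by (simp add: sums_iff)
    then show ?thesis using False by simp
  qed
  show ?thesis
    using HK unfolding final unfolding K_def P_def as_def bs_def F_def Let_def .
qed


end
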